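(* Let $T$ be an $spo$-tableau and $x_1\in B_1$ such that the new box of $U=x_1\rightarrow T$ lies in row 1. If $x_2\in B_0$ and the insertion of $x_2$ into $U$ causes a cancellation, then the first rows of $U\leftarrow x_2$ and of $U$ have the same number of boxes.
   Context: Fix positive integers $m,n$. Let $B_0=\{1,\bar1,2,\bar2,\dots,m,\bar m\}$, $B_1=\{1^\circ,\dots,n^\circ\}$, $B=B_0\cup B_1$, totally ordered by $1<\bar1<2<\bar2<\cdots<m<\bar m<1^\circ<\cdots<n^\circ$. Rows are numbered from the top starting at 1, columns from the left. An $spo$-tableau of shape $\lambda$ is a filling of the Young diagram of $\lambda$ with entries of $B$ such that (i) the boxes containing entries of $B_0$ form a Young diagram $\sigma\subseteq\lambda$, and this part is weakly increasing along rows, strictly increasing down columns, and every entry in row $i$ is $\ge i$; (ii) the entries of $B_1$ (filling $\lambda/\sigma$) are strictly increasing along rows and weakly increasing down columns. $spo$-insertion: a forward jeu de taquin slide on an empty box with right neighbour $a$ and lower neighbour $b$ moves $a$ left into the empty box if $a<b$ or ($a=b\in B_1$), and moves $b$ up into the empty box if $b<a$ or ($a=b\in B_0$); if only one neighbour exists it moves in; slides are repeated until the empty box has no right or lower neighbour, and then that box is deleted. Inserting $z\in B_0$ into row $r$: if no entry of the row exceeds $z$, append $z$ in a new box at the end of the row; otherwise let $w$ be the least entry of the row with $w>z$; if $z=r$ (unbarred) and $w=\bar r$, delete $\bar r$ leaving an empty box (a cancellation); otherwise replace $w$ by $z$, displacing $w$. Inserting $z\in B_1$ into column $c$: if no entry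 of the column exceeds $z$, append $z$ in a new box at the bottom; otherwise replace the least entry $w>z$ of the column by $z$, displacing $w$. To insert $x\in B_0$ into $T$ (result $T\leftarrow x$) start by inserting $x$ into row 1; to insert $x\in B_1$ (result $x\rightarrow T$) start by inserting $x$ into column 1. Whenever an entry $w$ is displaced from a box in row $r$, column $c$: if $w\in B_0$ insert it into row $r+1$; if $w\in B_1$ insert it into column $c+1$. The process ends when an entry is placed in a new box, or when a cancellation occurs, in which case the empty box is moved to an outer corner by forward slides and deleted. If no cancellation occurs the result has exactly one new box; if a cancellation occurs the result has exactly one box fewer. *)

theory Defs
  imports Main
begin

text \<open>Ent i is the unbarred letter i, Bar i is the barred letter, Circ j is j-circle.\<close>
datatype entry = Ent nat | Bar nat | Circ nat

fun rk :: "entry \<Rightarrow> nat" where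
  "rk (Ent i) = 2 * i"
| "rk (Bar i) = 2 * i + 1"
| "rk (Circ j) = j"

fun isB0 :: "entry \<Rightarrow> bool" where
  "isB0 (Circ _) = False"
| "isB0 _ = True"

instantiation entry :: linorder
begin
definition less_eq_entry :: "entry \<Rightarrow> entry \<Rightarrow> bool" where
  "less_eq_entry a b = (if isB0 a = isB0 b then rk a \<le> rk b else isB0 a)"
definition less_entry :: "entry \<Rightarrow> entry \<Rightarrow> bool" where
  "less_entry a b = (a \<le> b \<and> \<not> b \<le> a)"
instance
proof
  fix x y z :: entry
  show "(x < y) = (x \<le> y \<and> \<not> y \<le> x)" by (simp add: less_entry_def)
  show "x \<le> x" by (simp add: less_eq_entry_def)
  show "x \<le> y \<Longrightarrow> y \<le> z \<Longrightarrow> x \<le> z"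
    by (cases x; cases y; cases z; auto simp: less_eq_entry_def split: if_splits)
  show "x \<le> y \<Longrightarrow> y \<le> x \<Longrightarrow> x = y"
    by (cases x; cases y; auto simp: less_eq_entry_def split: if_splits; presburger)
  show "x \<le> y \<or> y \<le> x"
    by (cases x; cases y; auto simp: less_eq_entry_def)
qed
end

definition inB0 :: "nat \<Rightarrow> entry \<Rightarrow> bool" where
  "inB0 m e = (\<exists>i. 1 \<le> i \<and> i \<le> m \<and> (e = Ent i \<or> e = Bar i))"

definition inB1 :: "nat \<Rightarrow> entry \<Rightarrow> bool" where
  "inB1 n e = (\<exists>j. 1 \<le> j \<and> j \<le> n \<and> e = Circ j)"

section \<open>Tableaux: partial fillings of boxes (row, column), both 1-indexed\<close>

type_synonym tab = "nat \<times> nat \<Rightarrow> entry option"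

definition young :: "(nat \<times> nat) set \<Rightarrow> bool" where
  "young D = (finite D \<and> (\<forall>(i,j)\<in>D. 1 \<le> i \<and> 1 \<le> j \<and>
      (\<forall>i' j'. 1 \<le> i' \<and> i' \<le> i \<and> 1 \<le> j' \<and> j' \<le> j \<longrightarrow> (i',j') \<in> D)))"

definition spo_tableau :: "nat \<Rightarrow> nat \<Rightarrow> tab \<Rightarrow> bool" where
  "spo_tableau m n T = (
     young (dom T) \<and>
     (\<forall>p e. T p = Some e \<longrightarrow> inB0 m e \<or> inB1 n e) \<and>
     young {p. \<exists>e. T p = Some e \<and> isB0 e} \<and>
     \<comment> \<open>B0 part: weakly increasing along rows, strictly down columns, row i entries \<ge> i\<close>
     (\<forall>i j a b. T (i,j) = Some a \<and> T (i,j+1) = Some b \<and> isB0 a \<and> isB0 b \<longrightarrow> a \<le> b) \<and>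
     (\<forall>i j a b. T (i,j) = Some a \<and> T (i+1,j) = Some b \<and> isB0 a \<and> isB0 b \<longrightarrow> a < b) \<and>
     (\<forall>i j a. T (i,j) = Some a \<and> isB0 a \<longrightarrow> Ent i \<le> a) \<and>
     \<comment> \<open>B1 part: strictly increasing along rows, weakly down columns\<close>
     (\<forall>i j a b. T (i,j) = Some a \<and> T (i,j+1) = Some b \<and> \<not> isB0 a \<and> \<not> isB0 b \<longrightarrow> a < b) \<and>
     (\<forall>i j a b. T (i,j) = Some a \<and> T (i+1,j) = Some b \<and> \<not> isB0 a \<and> \<not> isB0 b \<longrightarrow> a \<le> b))"

definition row_len :: "tab \<Rightarrow> nat \<Rightarrow> nat" where
  "row_len T r = card {j. T (r,j) \<noteq> None}"

datatype state =
    RowIns tab entry nat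
  | ColIns tab entry nat
  | Slide tab nat nat        \<comment> \<open>empty box (not in the domain of tab) at (i,j)\<close>
  | Done tab bool            \<comment> \<open>final tableau; flag = a cancellation occurred\<close>

definition displace :: "tab \<Rightarrow> entry \<Rightarrow> nat \<Rightarrow> nat \<Rightarrow> state" where
  "displace T w r c = (if isB0 w then RowIns T w (r+1) else ColIns T w (c+1))"

definition row_pos :: "tab \<Rightarrow> entry \<Rightarrow> nat \<Rightarrow> nat" where
  "row_pos T z r = (LEAST j. \<exists>w. T (r,j) = Some w \<and> z < w \<and>
       (\<forall>j' w'. T (r,j') = Some w' \<and> z < w' \<longrightarrow> w \<le> w'))"

definition col_pos :: "tab \<Rightarrow> entry \<Rightarrow> nat \<Rightarrow> nat" where
  "col_pos T z c = (LEAST i. \<exists>w. T (i,c) = Some w \<and> z < w \<and>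
       (\<forall>i' w'. T (i',c) = Some w' \<and> z < w' \<longrightarrow> w \<le> w'))"

fun step :: "state \<Rightarrow> state" where
  "step (RowIns T z r) =
     (if \<not> (\<exists>j w. T (r,j) = Some w \<and> z < w)
      then Done (T ((r, LEAST j. 1 \<le> j \<and> T (r,j) = None) := Some z)) False
      else (let j = row_pos T z r; w = the (T (r,j)) in
            if z = Ent r \<and> w = Bar r then Slide (T ((r,j) := None)) r j
            else displace (T ((r,j) := Some z)) w r j))"
| "step (ColIns T z c) =
     (if \<not> (\<exists>i w. T (i,c) = Some w \<and> z < w)
      then Done (T ((LEAST i. 1 \<le> i \<and> T (i,c) = None, c) := Some z)) False
      else (let i = col_pos T z c; w = the (T (i,c)) in
            displace (T ((i,c) := Some z)) w i c))"
| "step (Slide T i j) =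
     (case (T (i,j+1), T (i+1,j)) of
        (None, None) \<Rightarrow> Done T True
      | (Some a, None) \<Rightarrow> Slide (T ((i,j) := Some a, (i,j+1) := None)) i (j+1)
      | (None, Some b) \<Rightarrow> Slide (T ((i,j) := Some b, (i+1,j) := None)) (i+1) j
      | (Some a, Some b) \<Rightarrow>
          (if a < b \<or> (a = b \<and> \<not> isB0 a)
           then Slide (T ((i,j) := Some a, (i,j+1) := None)) i (j+1)
           else Slide (T ((i,j) := Some b, (i+1,j) := None)) (i+1) j))"
| "step (Done T c) = Done T c"

definition runs_to :: "state \<Rightarrow> tab \<Rightarrow> bool \<Rightarrow> bool" where
  "runs_to s U c = (\<exists>k. (step ^^ k) s = Done U c)"

text \<open>row_insert T x U c:  U = T \<leftarrow> x  (x in B0), c = whether a cancellation occurred.\<close>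
definition row_insert :: "tab \<Rightarrow> entry \<Rightarrow> tab \<Rightarrow> bool \<Rightarrow> bool" where
  "row_insert T x U c = runs_to (RowIns T x 1) U c"

text \<open>col_insert T x U c:  U = x \<rightarrow> T  (x in B1).\<close>
definition col_insert :: "tab \<Rightarrow> entry \<Rightarrow> tab \<Rightarrow> bool \<Rightarrow> bool" where
  "col_insert T x U c = runs_to (ColIns T x 1) U c"

end

theory Submission imports Defs begin

lemma ord_B0_B1: "isB0 a \<Longrightarrow> \<not> isB0 b \<Longrightarrow> a < b"
  by (simp add: less_entry_def less_eq_entry_def)

lemma B1_gt: "\<not> isB0 z \<Longrightarrow> z < w \<Longrightarrow> \<not> isB0 w"
  using ord_B0_B1[of w z] by auto

lemma youngD: "young D \<Longrightarrow> (i,j) \<in> D \<Longrightarrow> 1 \<le> i' \<Longrightarrow> i' \<le> i \<Longrightarrow> 1 \<le> j' \<Longrightarrow> j' \<le> j \<Longrightarrow> (i',j') \<in> D"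
  unfolding young_def by blast

lemma youngD1: "young D \<Longrightarrow> (i,j) \<in> D \<Longrightarrow> 1 \<le> i \<and> 1 \<le> j"
  unfolding young_def by blast

lemma col_adj:
  assumes spo: "spo_tableau m n T" and a: "T(i,c) = Some a" and b: "T(i+1,c) = Some b"
  shows "a \<le> b"
proof -
  have yb: "young {p. \<exists>e. T p = Some e \<and> isB0 e}" using spo by (simp add: spo_tableau_def)
  have yd: "young (dom T)" using spo by (simp add: spo_tableau_def)
  show ?thesis
  proof (cases "isB0 a")
    case True
    then show ?thesis
    proof (cases "isB0 b")
      case True
      with \<open>isB0 a\<close> a b spo show ?thesis unfolding spo_tableau_def by (meson less_imp_le)
    next
      case False
      with \<open>isB0 a\<close> show ?thesis using ord_B0_B1 less_imp_le by blast
    qed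
  next
    case False
    then show ?thesis
    proof (cases "isB0 b")
      case True
      have "(i+1,c) \<in> {p. \<exists>e. T p = Some e \<and> isB0 e}" using b True by auto
      moreover have "1 \<le> i" using yd a b youngD1[OF yd, of i c] by auto
      moreover have "1 \<le> c" using youngD1[OF yd, of "i+1" c] b by auto
      ultimately have "(i,c) \<in> {p. \<exists>e. T p = Some e \<and> isB0 e}" using youngD[OF yb, of "i+1" c i c] by auto
      with a False show ?thesis by auto
    next
      case False
      with \<open>\<not> isB0 a\<close> a b spo show ?thesis unfolding spo_tableau_def by blast
    qed
  qed
qed

lemma col_mono:
  assumes spo: "spo_tableau m n T"
  shows "T(k,c) = Some a \<Longrightarrow> T(k+d,c) = Some b \<Longrightarrow> 1 \<le> k \<Longrightarrow> a \<le> b"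
proof (induction d arbitrary: b)
  case 0
  then show ?case by simp
next
  case (Suc d)
  have yd: "young (dom T)" using spo by (simp add: spo_tableau_def)
  have "1 \<le> c" using youngD1[OF yd, of "k + Suc d" c] Suc.prems by auto
  then have "(k+d,c) \<in> dom T" using youngD[OF yd, of "k+Suc d" c "k+d" c] Suc.prems by auto
  then obtain b' where b': "T(k+d,c) = Some b'" by auto
  have "a \<le> b'" using Suc.IH[OF Suc.prems(1) b' Suc.prems(3)] .
  moreover have "b' \<le> b" using col_adj[OF spo b'] Suc.prems(2) by simp
  ultimately show ?case by simp
qed

lemma row_B1:
  assumes spo: "spo_tableau m n T" and w: "T(r,c) = Some w" "\<not> isB0 w"
    and cc: "c \<le> c'" and e: "T(r,c') = Some e"
  shows "\<not> isB0 e"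
proof
  assume "isB0 e"
  have yb: "young {p. \<exists>e. T p = Some e \<and> isB0 e}" using spo by (simp add: spo_tableau_def)
  have yd: "young (dom T)" using spo by (simp add: spo_tableau_def)
  have "1 \<le> r" "1 \<le> c" using youngD1[OF yd, of r c] w by auto
  then have "(r,c) \<in> {p. \<exists>e. T p = Some e \<and> isB0 e}"
    using youngD[OF yb, of r c' r c] e \<open>isB0 e\<close> cc by auto
  with w show False by auto
qed

lemma witness_col:
  assumes fin: "finite (dom X)" and ex: "\<exists>i w. X(i,c) = Some w \<and> z < w"
  shows "\<exists>w. X(col_pos X z c, c) = Some w \<and> z < w \<and> (\<forall>i' w'. X(i',c) = Some w' \<and> z < w' \<longrightarrow> w \<le> w')"
proof -
  define S where "S = {w. \<exists>i. X(i,c) = Some w \<and> z < w}"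
  have "S \<subseteq> ran X" unfolding S_def ran_def by auto
  then have finS: "finite S" using finite_ran[OF fin] finite_subset by blast
  have "S \<noteq> {}" using ex unfolding S_def by auto
  then have "Min S \<in> S" using finS by simp
  then obtain i0 where i0: "X(i0,c) = Some (Min S)" "z < Min S" unfolding S_def by auto
  have "\<exists>w. X(i0,c) = Some w \<and> z < w \<and> (\<forall>i' w'. X(i',c) = Some w' \<and> z < w' \<longrightarrow> w \<le> w')"
    using i0 finS unfolding S_def by (auto intro!: Min_le)
  from LeastI[of "\<lambda>i. \<exists>w. X(i,c) = Some w \<and> z < w \<and> (\<forall>i' w'. X(i',c) = Some w' \<and> z < w' \<longrightarrow> w \<le> w')", OF this]
  show ?thesis unfolding col_pos_def .
qed

lemma witness_row:
  assumes fin: "finite (dom X)" and ex: "\<exists>j w. X(r,j) = Some w \<and> z < w"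
  shows "\<exists>w. X(r, row_pos X z r) = Some w \<and> z < w \<and> (\<forall>j' w'. X(r,j') = Some w' \<and> z < w' \<longrightarrow> w \<le> w')"
proof -
  define S where "S = {w. \<exists>j. X(r,j) = Some w \<and> z < w}"
  have "S \<subseteq> ran X" unfolding S_def ran_def by auto
  then have finS: "finite S" using finite_ran[OF fin] finite_subset by blast
  have "S \<noteq> {}" using ex unfolding S_def by auto
  then have "Min S \<in> S" using finS by simp
  then obtain j0 where j0: "X(r,j0) = Some (Min S)" "z < Min S" unfolding S_def by auto
  have "\<exists>w. X(r,j0) = Some w \<and> z < w \<and> (\<forall>j' w'. X(r,j') = Some w' \<and> z < w' \<longrightarrow> w \<le> w')"
    using j0 finS unfolding S_def by (auto intro!: Min_le)
  from LeastI[of "\<lambda>j. \<exists>w. X(r,j) = Some w \<and> z < w \<and> (\<forall>j' w'. X(r,j') = Some w' \<and> z < w' \<longrightarrow> w \<le> w')", OF this]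
  show ?thesis unfolding row_pos_def .
qed

lemma done_funpow: "(step ^^ k) (Done X c) = Done X c"
  by (induction k) auto


definition QA :: "tab \<Rightarrow> tab \<Rightarrow> entry \<Rightarrow> nat \<Rightarrow> bool" where
  "QA T X z c = (2 \<le> c \<and> (1,c-1) \<in> dom T \<and> (\<exists>b. X(2,c-1) = Some b \<and> b < z))"

definition QB :: "tab \<Rightarrow> nat \<Rightarrow> bool" where
  "QB X c = (\<exists>k a b. 2 \<le> k \<and> k < c \<and> X(2,k-1) = Some b \<and> X(1,k) = Some a \<and> b < a \<and> \<not> isB0 a
      \<and> (\<forall>c' e. k \<le> c' \<longrightarrow> X(1,c') = Some e \<longrightarrow> \<not> isB0 e))"

definition QC :: "tab \<Rightarrow> bool" where
  "QC X = (\<forall>c' e. X(1,c') = Some e \<longrightarrow> \<not> isB0 e)"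

definition InvC :: "tab \<Rightarrow> tab \<Rightarrow> entry \<Rightarrow> nat \<Rightarrow> bool" where
  "InvC T X z c = (\<not> isB0 z \<and> 1 \<le> c \<and> (\<forall>i c'. c \<le> c' \<longrightarrow> X(i,c') = T(i,c')) \<and> dom X = dom T
     \<and> (c = 1 \<or> QA T X z c \<or> QB X c \<or> QC X))"

definition G :: "tab \<Rightarrow> bool" where
  "G X = (\<forall>j0. X(1,j0) = Some (Bar 1) \<longrightarrow> (\<exists>cs. j0 \<le> cs \<and> (\<forall>c'. j0 \<le> c' \<and> c' \<le> Suc cs \<longrightarrow> X(1,c') \<noteq> None)
      \<and> (\<exists>a b. X(2,cs) = Some b \<and> X(1,Suc cs) = Some a \<and> b < a \<and> \<not> isB0 a)))"

fun Inv1 :: "tab \<Rightarrow> nat \<Rightarrow> state \<Rightarrow> bool" where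
  "Inv1 T j (ColIns X z c) = InvC T X z c"
| "Inv1 T j (Done X cc) = (dom X = insert (1,j) (dom T) \<longrightarrow> G X)"
| "Inv1 T j _ = False"

lemma final_G:
  assumes spo: "spo_tableau m n T" and Tj: "T(1,j) = None" and inv: "InvC T X z c"
    and d: "dom (X(p := Some z)) = insert (1,j) (dom T)" and pc: "snd p = c"
  shows "G (X(p := Some z))"
proof -
  have yd: "young (dom T)" using spo by (simp add: spo_tableau_def)
  have dX: "dom X = dom T" and zB: "\<not> isB0 z" and agree: "\<forall>i c'. c \<le> c' \<longrightarrow> X(i,c') = T(i,c')"
    using inv by (auto simp: InvC_def)
  have jn: "(1,j) \<notin> dom T" using Tj by auto
  have "p \<notin> dom T"
  proof
    assume "p \<in> dom T"
    then have "dom (X(p := Some z)) = dom T" using dX by auto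
    with d jn show False by auto
  qed
  then have p: "p = (1,j)" using d dX by auto
  then have cj: "c = j" using pc by simp
  have j1: "1 \<le> j" using inv cj by (simp add: InvC_def)
  let ?U = "X((1,j) := Some z)"
  show ?thesis unfolding G_def p
  proof (intro allI impI)
    fix j0 assume u: "?U(1,j0) = Some (Bar 1)"
    have j0j: "j0 \<noteq> j" using u zB by auto
    then have Xj0: "X(1,j0) = Some (Bar 1)" using u by simp
    then have j0T: "(1,j0) \<in> dom T" using dX by auto
    have j01: "1 \<le> j0" using youngD1[OF yd j0T] by simp
    have j0lt: "j0 < j"
    proof (rule ccontr)
      assume "\<not> j0 < j"
      then have "(1,j) \<in> dom T" using youngD[OF yd j0T, of 1 j] j1 by auto
      with jn show False by simp
    qed
    consider "c = 1" | "QA T X z c" | "QB X c" | "QC X" using inv by (auto simp: InvC_def)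
    then show "\<exists>cs. j0 \<le> cs \<and> (\<forall>c'. j0 \<le> c' \<and> c' \<le> Suc cs \<longrightarrow> ?U(1,c') \<noteq> None)
      \<and> (\<exists>a b. ?U(2,cs) = Some b \<and> ?U(1,Suc cs) = Some a \<and> b < a \<and> \<not> isB0 a)"
    proof cases
      case 1
      then show ?thesis using j0lt j01 cj by simp
    next
      case 2
      then obtain b where b: "X(2,j-1) = Some b" "b < z" and d1: "(1,j-1) \<in> dom T" "2 \<le> j"
        using cj by (auto simp: QA_def)
      show ?thesis
      proof (intro exI conjI allI impI)
        show "j0 \<le> j - 1" using j0lt by simp
        fix c' assume c': "j0 \<le> c' \<and> c' \<le> Suc (j-1)"
        show "?U(1,c') \<noteq> None"
        proof (cases "c' = j")
          case False
          then have "c' \<le> j - 1" using c' d1(2) by auto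
          then have "(1,c') \<in> dom T" using youngD[OF yd d1(1), of 1 c'] c' j01 by (meson le_trans order_refl)
          then show ?thesis using dX False by auto
        qed simp
      next
        show "?U(2,j-1) = Some b" using b by simp
        show "?U(1,Suc (j-1)) = Some z" using d1 by simp
      qed (use b zB in auto)
    next
      case 3
      then obtain k a b where k: "2 \<le> k" "k < c" "X(2,k-1) = Some b" "X(1,k) = Some a" "b < a" "\<not> isB0 a"
        and row: "\<forall>c' e. k \<le> c' \<longrightarrow> X(1,c') = Some e \<longrightarrow> \<not> isB0 e" by (auto simp: QB_def)
      have "j0 < k"
      proof (rule ccontr)
        assume "\<not> j0 < k"
        then have "k \<le> j0" by simp
        from row[rule_format, OF this Xj0] show False by simp
      qed
      have kT: "(1,k) \<in> dom T" using k dX by auto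
      show ?thesis
      proof (intro exI conjI allI impI)
        show "j0 \<le> k - 1" using \<open>j0 < k\<close> by simp
        fix c' assume c': "j0 \<le> c' \<and> c' \<le> Suc (k-1)"
        then have "(1,c') \<in> dom T" using youngD[OF yd kT, of 1 c'] j01 k by auto
        moreover have "c' \<noteq> j" using c' k cj by auto
        ultimately show "?U(1,c') \<noteq> None" using dX by auto
      next
        show "?U(2,k-1) = Some b" using k by simp
        show "?U(1,Suc (k-1)) = Some a" using k cj by simp
      qed (use k in auto)
    next
      case 4
      then have "\<not> isB0 (Bar 1)" using Xj0 unfolding QC_def by blast
      then show ?thesis by simp
    qed
  qed
qed


lemma colins_step:
  assumes spo: "spo_tableau m n T" and Tj: "T(1,j) = None" and inv: "InvC T X z c"
  shows "Inv1 T j (step (ColIns X z c))"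
proof (cases "\<exists>i w. X(i,c) = Some w \<and> z < w")
  case False
  then have "step (ColIns X z c) = Done (X((LEAST i. 1 \<le> i \<and> X(i,c) = None, c) := Some z)) False" by simp
  then show ?thesis using final_G[OF spo Tj inv] by simp
next
  case True
  have yd: "young (dom T)" using spo by (simp add: spo_tableau_def)
  have dX: "dom X = dom T" and zB: "\<not> isB0 z" and agree: "\<forall>i c'. c \<le> c' \<longrightarrow> X(i,c') = T(i,c')"
    and c1: "1 \<le> c"
    using inv by (auto simp: InvC_def)
  have fin: "finite (dom X)" using yd dX by (simp add: young_def)
  define i where "i = col_pos X z c"
  obtain w where w: "X(i,c) = Some w" "z < w" and wmin: "\<forall>i' w'. X(i',c) = Some w' \<and> z < w' \<longrightarrow> w \<le> w'"
    using witness_col[OF fin True] unfolding i_def by blast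
  have wB: "\<not> isB0 w" using B1_gt[OF zB w(2)] .
  define X' where "X' = X((i,c) := Some z)"
  have st: "step (ColIns X z c) = ColIns X' w (c+1)"
    using True w wB by (simp add: i_def[symmetric] Let_def displace_def X'_def)
  have Tw: "T(i,c) = Some w" using agree w by auto
  then have iT: "(i,c) \<in> dom T" by auto
  have i1: "1 \<le> i" using youngD1[OF yd iT] by simp
  have Q: "c + 1 = 1 \<or> QA T X' w (c+1) \<or> QB X' (c+1) \<or> QC X'"
  proof -
    consider "QB X c" | "QC X" | "c = 1 \<or> QA T X z c" using inv by (auto simp: InvC_def)
    then show ?thesis
    proof cases
      case 1
      then obtain k a b where k: "2 \<le> k" "k < c" "X(2,k-1) = Some b" "X(1,k) = Some a" "b < a" "\<not> isB0 a"
        and row: "\<forall>c' e. k \<le> c' \<longrightarrow> X(1,c') = Some e \<longrightarrow> \<not> isB0 e" by (auto simp: QB_def)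
      have "QB X' (c+1)" unfolding QB_def
      proof (intro exI conjI allI impI)
        show "X'(2,k-1) = Some b" using k by (auto simp: X'_def)
        show "X'(1,k) = Some a" using k by (simp add: X'_def)
        fix c' e assume "k \<le> c'" "X'(1,c') = Some e"
        then show "\<not> isB0 e" using row zB by (auto simp: X'_def split: if_splits)
      qed (use k in auto)
      then show ?thesis by simp
    next
      case 2
      then have "QC X'" using zB by (auto simp: QC_def X'_def split: if_splits)
      then show ?thesis by simp
    next
      case 3
      show ?thesis
      proof (cases "i = 1")
        case True
        note i1' = True
        show ?thesis
        proof (cases "c = 1")
          case True
          have "QC X'" unfolding QC_def
          proof (intro allI impI)
            fix c' e assume e: "X'(1,c') = Some e"
            show "\<not> isB0 e"
            proof (cases "c' = c")
              case True then show ?thesis using e zB i1' by (simp add: X'_def)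
            next
              case False
              then have Xe: "X(1,c') = Some e" using e i1' by (simp add: X'_def)
              then have "(1,c') \<in> dom T" using dX by auto
              then have "1 \<le> c'" using youngD1[OF yd] by simp
              then have "c \<le> c'" using \<open>c = 1\<close> by simp
              then have "T(1,c') = Some e" using agree Xe by auto
              then show ?thesis using row_B1[OF spo _ wB \<open>c \<le> c'\<close>] Tw i1' by simp
            qed
          qed
          then show ?thesis by simp
        next
          case False
          with 3 have qa: "QA T X z c" by simp
          then obtain b where b: "X(2,c-1) = Some b" "b < z" and c2: "2 \<le> c" by (auto simp: QA_def)
          have "QB X' (c+1)" unfolding QB_def
          proof (intro exI conjI allI impI)
            show "X'(2,c-1) = Some b" using b c2 by (auto simp: X'_def)
            show "X'(1,c) = Some z" using i1' by (simp add: X'_def)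
            fix c' e assume ce: "c \<le> c'" "X'(1,c') = Some e"
            show "\<not> isB0 e"
            proof (cases "c' = c")
              case True then show ?thesis using ce zB i1' by (simp add: X'_def)
            next
              case False
              then have Xe: "X(1,c') = Some e" using ce i1' by (simp add: X'_def)
              then have "T(1,c') = Some e" using agree ce by auto
              then show ?thesis using row_B1[OF spo _ wB ce(1)] Tw i1' by simp
            qed
          qed (use b c2 zB in auto)
          then show ?thesis by simp
        qed
      next
        case False
        then have i2: "2 \<le> i" using i1 by simp
        have "(1,c) \<in> dom T" using youngD[OF yd iT, of 1 c] c1 i1 by auto
        moreover have "\<exists>b. X'(2,c) = Some b \<and> b < w"
        proof (cases "i = 2")
          case True then show ?thesis using w by (simp add: X'_def)
        next
          case False
          then have i3: "2 < i" using i2 by simp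
          have "(2,c) \<in> dom T" using youngD[OF yd iT, of 2 c] c1 i2 by auto
          then obtain b where Tb: "T(2,c) = Some b" by auto
          have Xb: "X(2,c) = Some b" using agree Tb by auto
          have "2 + (i-2) = i" using i3 by simp
          then have "b \<le> w" using col_mono[OF spo Tb, of "i-2" w] Tw by simp
          moreover have "b \<noteq> w"
          proof
            assume "b = w"
            then have "\<exists>w. X(2,c) = Some w \<and> z < w \<and> (\<forall>i' w'. X(i',c) = Some w' \<and> z < w' \<longrightarrow> w \<le> w')"
              using Xb w wmin by blast
            then have "i \<le> 2" unfolding i_def col_pos_def by (rule Least_le)
            with i3 show False by simp
          qed
          ultimately show ?thesis using Xb False by (simp add: X'_def)
        qed
        ultimately have "QA T X' w (c+1)" using c1 by (simp add: QA_def)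
        then show ?thesis by simp
      qed
    qed
  qed
  have "InvC T X' w (c+1)" unfolding InvC_def
  proof (intro conjI)
    show "\<forall>i' c'. c + 1 \<le> c' \<longrightarrow> X'(i',c') = T(i',c')" using agree by (auto simp: X'_def)
    show "dom X' = dom T" using dX iT by (auto simp: X'_def)
  qed (use wB Q in auto)
  then show ?thesis using st by simp
qed

lemma stage1:
  assumes spo: "spo_tableau m n T" and Tj: "T(1,j) = None"
  shows "Inv1 T j s \<Longrightarrow> (step ^^ k) s = Done U cc \<Longrightarrow> dom U = insert (1,j) (dom T) \<Longrightarrow> G U"
proof (induction k arbitrary: s)
  case 0
  then show ?case by auto
next
  case (Suc k)
  have "Inv1 T j (step s)"
  proof (cases s)
    case (ColIns X z c)
    then show ?thesis using colins_step[OF spo Tj] Suc.prems by simp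
  next
    case (Done X c)
    then show ?thesis using Suc.prems by simp
  qed (use Suc.prems in auto)
  moreover have "(step ^^ k) (step s) = Done U cc" using Suc.prems(2) by (simp only: funpow_Suc_right comp_def)
  ultimately show ?case using Suc.IH Suc.prems by blast
qed


definition row1 :: "tab \<Rightarrow> nat set" where
  "row1 X = {jj. X(1,jj) \<noteq> None}"

definition W :: "tab \<Rightarrow> nat set \<Rightarrow> bool" where
  "W X R1 = (finite (dom X) \<and> (\<forall>jj. X(0,jj) = None) \<and> row1 X = R1)"

definition SG :: "tab \<Rightarrow> nat \<Rightarrow> nat set \<Rightarrow> bool" where
  "SG X jj R1 = (X(1,jj) = None \<and> jj \<in> R1 \<and> row1 X = R1 - {jj} \<and>
     (\<exists>cs. jj \<le> cs \<and> (\<forall>c'. jj < c' \<and> c' \<le> Suc cs \<longrightarrow> X(1,c') \<noteq> None)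
        \<and> (\<exists>a b. X(2,cs) = Some b \<and> X(1,Suc cs) = Some a \<and> b < a \<and> \<not> isB0 a)))"

fun J :: "nat set \<Rightarrow> state \<Rightarrow> bool" where
  "J R1 (RowIns X z r) = (2 \<le> r \<and> W X R1)"
| "J R1 (ColIns X z c) = W X R1"
| "J R1 (Slide X i jj) = (finite (dom X) \<and> (\<forall>jj'. X(0,jj') = None) \<and>
      ((2 \<le> i \<and> row1 X = R1) \<or> (i = 1 \<and> SG X jj R1)))"
| "J R1 (Done X cc) = (cc \<longrightarrow> row1 X = R1)"

lemma slide_cases:
  "(X(i,jj+1) = None \<and> X(i+1,jj) = None \<and> step (Slide X i jj) = Done X True)
   \<or> (\<exists>a. X(i,jj+1) = Some a \<and> (\<forall>b. X(i+1,jj) = Some b \<longrightarrow> a < b \<or> (a = b \<and> \<not> isB0 a))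
        \<and> step (Slide X i jj) = Slide (X((i,jj) := Some a, (i,jj+1) := None)) i (jj+1))
   \<or> (\<exists>b. X(i+1,jj) = Some b \<and> (\<forall>a. X(i,jj+1) = Some a \<longrightarrow> \<not> (a < b \<or> (a = b \<and> \<not> isB0 a)))
        \<and> step (Slide X i jj) = Slide (X((i,jj) := Some b, (i+1,jj) := None)) (i+1) jj)"
  by (cases "X(i,jj+1)"; cases "X(i+1,jj)"; auto)

lemma slide_step:
  assumes "J R1 (Slide X i jj)"
  shows "J R1 (step (Slide X i jj))"
proof -
  have fin: "finite (dom X)" and r0: "\<forall>jj'. X(0,jj') = None"
    and cs: "(2 \<le> i \<and> row1 X = R1) \<or> (i = 1 \<and> SG X jj R1)" using assms by auto
  from cs show ?thesis
  proof
    assume a: "2 \<le> i \<and> row1 X = R1"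
    from slide_cases[of X i jj] show ?thesis
    proof (elim disjE exE conjE)
      assume "step (Slide X i jj) = Done X True" then show ?thesis using a by simp
    next
      fix x assume "step (Slide X i jj) = Slide (X((i,jj) := Some x, (i,jj+1) := None)) i (jj+1)"
      then show ?thesis using a fin r0 by (auto simp: row1_def)
    next
      fix x assume "step (Slide X i jj) = Slide (X((i,jj) := Some x, (i+1,jj) := None)) (i+1) jj"
      then show ?thesis using a fin r0 by (auto simp: row1_def)
    qed
  next
    assume a: "i = 1 \<and> SG X jj R1"
    then have i1: "i = 1" by simp
    from a obtain cs a0 b0 where Xj: "X(1,jj) = None" and jR: "jj \<in> R1" and rw: "row1 X = R1 - {jj}"
      and jc: "jj \<le> cs" and fill: "\<forall>c'. jj < c' \<and> c' \<le> Suc cs \<longrightarrow> X(1,c') \<noteq> None"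
      and ab: "X(2,cs) = Some b0" "X(1,Suc cs) = Some a0" "b0 < a0" "\<not> isB0 a0"
      unfolding SG_def by blast
    have nx: "X(1,jj+1) \<noteq> None" using fill jc by auto
    from slide_cases[of X i jj] show ?thesis
    proof (elim disjE exE conjE)
      assume "X(i,jj+1) = None" then show ?thesis using nx i1 by simp
    next
      fix x assume x: "X(i,jj+1) = Some x" and cmp: "\<forall>b. X(i+1,jj) = Some b \<longrightarrow> x < b \<or> (x = b \<and> \<not> isB0 x)"
        and st: "step (Slide X i jj) = Slide (X((i,jj) := Some x, (i,jj+1) := None)) i (jj+1)"
      have jcs: "jj \<noteq> cs"
      proof
        assume "jj = cs"
        then have "x = a0" "X(i+1,jj) = Some b0" using x ab i1 by (auto simp: numeral_2_eq_2)
        then show False using cmp ab by auto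
      qed
      let ?X = "X((i,jj) := Some x, (i,jj+1) := None)"
      have "SG ?X (jj+1) R1" unfolding SG_def
      proof (intro conjI exI allI impI)
        show "?X(1,jj+1) = None" using i1 by simp
        show "jj+1 \<in> R1" using rw x i1 by (auto simp: row1_def)
        show "row1 ?X = R1 - {jj+1}" using rw x i1 Xj jR by (auto simp: row1_def)
        show "jj + 1 \<le> cs" using jcs jc by simp
        fix c' assume "jj + 1 < c' \<and> c' \<le> Suc cs"
        then show "?X(1,c') \<noteq> None" using fill i1 by auto
      next
        show "?X(2,cs) = Some b0" using ab i1 by simp
        show "?X(1,Suc cs) = Some a0" using ab i1 jcs jc by simp
      qed (use ab in auto)
      then show ?thesis using st i1 fin r0 by auto
    next
      fix y assume y: "X(i+1,jj) = Some y"
        and st: "step (Slide X i jj) = Slide (X((i,jj) := Some y, (i+1,jj) := None)) (i+1) jj"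
      let ?X = "X((i,jj) := Some y, (i+1,jj) := None)"
      have "row1 ?X = R1" using rw jR i1 by (auto simp: row1_def)
      then show ?thesis using st i1 fin r0 by auto
    qed
  qed
qed

lemma J_step:
  assumes "J R1 s"
  shows "J R1 (step s)"
proof (cases s)
  case (Slide X i jj)
  then show ?thesis using slide_step assms by simp
next
  case (Done X c)
  then show ?thesis using assms by simp
next
  case (RowIns X z r)
  have r2: "2 \<le> r" and fin: "finite (dom X)" and r0: "\<forall>jj. X(0,jj) = None" and rw: "row1 X = R1"
    using assms RowIns by (auto simp: W_def)
  show ?thesis
  proof (cases "\<exists>j w. X(r,j) = Some w \<and> z < w")
    case False
    then show ?thesis using RowIns by simp
  next
    case True
    define jj where "jj = row_pos X z r"
    define w where "w = the (X(r,jj))"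
    have st0: "step s = (if z = Ent r \<and> w = Bar r then Slide (X((r,jj):=None)) r jj else displace (X((r,jj):=Some z)) w r jj)"
      using True unfolding RowIns jj_def w_def step.simps Let_def by (simp only: True not_True_eq_False if_False)
    show ?thesis
    proof (cases "z = Ent r \<and> w = Bar r")
      case True
      then have "step s = Slide (X((r,jj) := None)) r jj"
        using st0 by simp
      then show ?thesis using r2 fin r0 rw by (auto simp: row1_def)
    next
      case False
      have st: "step s = displace (X((r,jj) := Some z)) w r jj"
        using st0 unfolding if_not_P[OF False] .
      show ?thesis using st r2 fin r0 rw by (auto simp: displace_def W_def row1_def)
    qed
  qed
next
  case (ColIns X z c)
  have fin: "finite (dom X)" and r0: "\<forall>jj. X(0,jj) = None" and rw: "row1 X = R1"
    using assms ColIns by (auto simp: W_def)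
  show ?thesis
  proof (cases "\<exists>i w. X(i,c) = Some w \<and> z < w")
    case False
    then show ?thesis using ColIns by simp
  next
    case True
    define i where "i = col_pos X z c"
    obtain w where w: "X(i,c) = Some w" "z < w"
      using witness_col[OF fin True] unfolding i_def by blast
    have i0: "i \<noteq> 0"
    proof
      assume "i = 0" then show False using w(1) r0 by simp
    qed
    have st: "step s = displace (X((i,c) := Some z)) w i c"
      using ColIns True w by (simp add: Let_def i_def[symmetric])
    show ?thesis using st i0 fin r0 rw w by (auto simp: displace_def W_def row1_def)
  qed
qed

lemma stage2:
  "J R1 s \<Longrightarrow> (step ^^ k) s = Done V True \<Longrightarrow> row1 V = R1"
proof (induction k arbitrary: s)
  case 0 then show ?case by auto
next
  case (Suc k)
  have "(step ^^ k) (step s) = Done V True" using Suc.prems(2) by (simp only: funpow_Suc_right comp_def)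
  then show ?case using Suc.IH J_step Suc.prems(1) by blast
qed


lemma init_step:
  assumes WU: "W U R1" and GU: "G U"
  shows "J R1 (step (RowIns U x2 1))"
proof (cases "\<exists>j w. U(1,j) = Some w \<and> x2 < w")
  case False
  then show ?thesis by simp
next
  case True
  have fin: "finite (dom U)" and r0: "\<forall>jj. U(0,jj) = None" and rw: "row1 U = R1"
    using WU by (auto simp: W_def)
  define jj where "jj = row_pos U x2 1"
  define w where "w = the (U(1,jj))"
  obtain w' where w': "U(1,jj) = Some w'" using witness_row[OF fin True] unfolding jj_def by blast
  then have ww: "U(1,jj) = Some w" by (simp add: w_def)
  have st0: "step (RowIns U x2 1) = (if x2 = Ent 1 \<and> w = Bar 1 then Slide (U((1,jj):=None)) 1 jj else displace (U((1,jj):=Some x2)) w 1 jj)"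
    using True unfolding jj_def w_def step.simps Let_def by (simp only: True not_True_eq_False if_False)
  show ?thesis
  proof (cases "x2 = Ent 1 \<and> w = Bar 1")
    case True
    then have st: "step (RowIns U x2 1) = Slide (U((1,jj):=None)) 1 jj" using st0 by simp
    have ub: "U(1,jj) = Some (Bar 1)" using ww True by simp
    from GU[unfolded G_def, rule_format, OF ub] obtain cs a b where
      cs: "jj \<le> cs" and fill: "\<forall>c'. jj \<le> c' \<and> c' \<le> Suc cs \<longrightarrow> U(1,c') \<noteq> None"
      and ab: "U(2,cs) = Some b" "U(1,Suc cs) = Some a" "b < a" "\<not> isB0 a" by blast
    let ?X = "U((1,jj):=None)"
    have "SG ?X jj R1" unfolding SG_def
    proof (intro conjI exI allI impI)
      show "?X(1,jj) = None" by simp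
      show "jj \<in> R1" using rw ub by (auto simp: row1_def)
      show "row1 ?X = R1 - {jj}" using rw by (auto simp: row1_def)
      show "jj \<le> cs" by (rule cs)
      fix c' assume "jj < c' \<and> c' \<le> Suc cs"
      then show "?X(1,c') \<noteq> None" using fill by auto
    next
      show "?X(2,cs) = Some b" using ab by simp
      show "?X(1,Suc cs) = Some a" using ab cs by simp
    qed (use ab in auto)
    then show ?thesis using st fin r0 by simp
  next
    case False
    have st: "step (RowIns U x2 1) = displace (U((1,jj):=Some x2)) w 1 jj"
      using st0 unfolding if_not_P[OF False] .
    show ?thesis using st fin r0 rw ww by (auto simp: displace_def W_def row1_def)
  qed
qed

theorem mainTheorem5:
  fixes m n :: nat and T U V :: tab and x1 x2 :: entry and j :: nat
  assumes "spo_tableau m n T"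
    and "inB1 n x1"
    and "col_insert T x1 U False"
    and "T (1,j) = None" and "dom U = insert (1,j) (dom T)"
    and "inB0 m x2"
    and "row_insert U x2 V True"
  shows "row_len V 1 = row_len U 1"
proof -
  note spo = assms(1) and Tj = assms(4) and dU = assms(5)
  have yd: "young (dom T)" using spo by (simp add: spo_tableau_def)
  obtain k where k: "(step ^^ k) (ColIns T x1 1) = Done U False"
    using assms(3) unfolding col_insert_def runs_to_def by blast
  have "\<not> isB0 x1" using assms(2) by (auto simp: inB1_def)
  then have "Inv1 T j (ColIns T x1 1)" by (simp add: InvC_def)
  then have GU: "G U" using stage1[OF spo Tj _ k dU] by simp
  have finU: "finite (dom U)" using dU yd by (simp add: young_def)
  have r0: "\<forall>jj. U(0,jj) = None"
  proof
    fix jj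
    have "(0,jj) \<notin> dom T" using youngD1[OF yd, of 0 jj] by auto
    then have "(0,jj) \<notin> dom U" using dU by auto
    then show "U(0,jj) = None" by auto
  qed
  have WU: "W U (row1 U)" using finU r0 by (simp add: W_def)
  obtain k2 where k2: "(step ^^ k2) (RowIns U x2 1) = Done V True"
    using assms(7) unfolding row_insert_def runs_to_def by blast
  then obtain k3 where "k2 = Suc k3" by (cases k2) auto
  with k2 have "(step ^^ k3) (step (RowIns U x2 1)) = Done V True"
    by (simp only: funpow_Suc_right comp_def)
  then have "row1 V = row1 U" using stage2 init_step[OF WU GU] by blast
  then show ?thesis by (simp add: row_len_def row1_def)
qed

end
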